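(* Let $\{\mathcal N,\gamma,\boldsymbol\ell,\ell^{(2)}\}$ be metric hypersurface data and $\stackrel{\circ}{\Sigma}=\pounds_n{\stackrel{\circ}{\nabla}}$. Then $$\begin{aligned}\stackrel{\circ}{\Sigma}{}^d{}_{ab}=&\,n^d\big(2{\stackrel{\circ}{\nabla}}_{(a}s_{b)}-n^{(2)}{\stackrel{\circ}{\nabla}}_a{\stackrel{\circ}{\nabla}}_b\ell^{(2)}-2{\stackrel{\circ}{\nabla}}_{(a}n^{(2)}{\stackrel{\circ}{\nabla}}_{b)}\ell^{(2)}+n(\ell^{(2)})U_{ab}\big)\\&+P^{dc}\big({\stackrel{\circ}{\nabla}}_aU_{bc}+{\stackrel{\circ}{\nabla}}_bU_{ca}-{\stackrel{\circ}{\nabla}}_cU_{ab}+(2s_c-n^{(2)}{\stackrel{\circ}{\nabla}}_c\ell^{(2)})U_{ab}+2F_{c(a}{\stackrel{\circ}{\nabla}}_{b)}n^{(2)}\big).\end{aligned}$$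
   Context: Metric hypersurface data $\{\mathcal N,\gamma,\boldsymbol\ell,\ell^{(2)}\}$: $\mathcal N$ smooth $\mathfrak n$-manifold, $\gamma$ symmetric $2$-covariant, $\boldsymbol\ell$ a one-form, $\ell^{(2)}$ a function, with $\boldsymbol{\mathcal A}|_p((W,a),(Z,b))=\gamma(W,Z)+a\boldsymbol\ell(Z)+b\boldsymbol\ell(W)+ab\ell^{(2)}$ non-degenerate on $T_p\mathcal N\times\mathbb R$. Its inverse $\mathcal A((\boldsymbol\alpha,a),(\boldsymbol\beta,b))=P(\boldsymbol\alpha,\boldsymbol\beta)+a\,n(\boldsymbol\beta)+b\,n(\boldsymbol\alpha)+ab\,n^{(2)}$ defines $P,n,n^{(2)}$ with $\gamma_{ab}n^b+n^{(2)}\ell_a=0$, $\ell_an^a+n^{(2)}\ell^{(2)}=1$, $P^{ab}\ell_b+\ell^{(2)}n^a=0$, $P^{ab}\gamma_{bc}+n^a\ell_c=\delta^a_c$. $\mathbf F=\frac12d\boldsymbol\ell$, $s_b=n^aF_{ab}$, $\mathbf U=\frac12\pounds_n\gamma+\boldsymbol\ell\otimes_sdn^{(2)}$ ($A\otimes_sB=\frac12(A\otimes B+B\otimes A)$). ${\stackrel{\circ}{\nabla}}$ is the unique torsion-free connection with $({\stackrel{\circ}{\nabla}}_X\gamma)(Z,W)=-\mathbf U(X,Z)\boldsymbol\ell(W)-\mathbf U(X,W)\boldsymbol\ell(Z)$, $({\stackrel{\circ}{\nabla}}_X\boldsymbol\ell)(Z)+({\stackrel{\circ}{\nabla}}_Z\boldsymbol\ell)(X)=-2\ell^{(2)}\mathbf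 U(X,Z)$. $\pounds_n{\stackrel{\circ}{\nabla}}$ is the $(1,2)$ tensor $\stackrel{\circ}{\Sigma}(X,W)=\pounds_n({\stackrel{\circ}{\nabla}}_XW)-{\stackrel{\circ}{\nabla}}_X(\pounds_nW)-{\stackrel{\circ}{\nabla}}_{\pounds_nX}W$, with components $\stackrel{\circ}{\Sigma}{}^d{}_{ab}$ ($X^aW^b$). Parentheses denote symmetrization with weight $1/2$. *)

theory Defs
  imports "HOL-Analysis.Analysis"
begin

text \<open>Everything is written in a coordinate chart: an open set Om of real^'n
(dimension CARD('n)).  Tensor fields are given by their components in the
coordinate basis.  Scalars: real^'n => real; (co)vectors: real^'n => 'n => real;
2-tensors: real^'n => 'n => 'n => real; connection coefficients
G x d a b = Gamma^d_{ab}, i.e. nabla_{d_a} d_b = sum_d Gamma^d_{ab} d_d.\<close>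

definition pd :: "'n::finite \<Rightarrow> (real^'n \<Rightarrow> real) \<Rightarrow> real^'n \<Rightarrow> real" where
  "pd i f x = deriv (\<lambda>t. f (x + t *\<^sub>R axis i 1)) 0"

fun pds :: "'n::finite list \<Rightarrow> (real^'n \<Rightarrow> real) \<Rightarrow> real^'n \<Rightarrow> real" where
  "pds [] f = f"
| "pds (i # is) f = pd i (pds is f)"

definition smooth_on :: "(real^'n::finite) set \<Rightarrow> (real^'n \<Rightarrow> real) \<Rightarrow> bool" where
  "smooth_on Om f \<longleftrightarrow> (\<forall>is. continuous_on Om (pds is f) \<and>
     (\<forall>i. \<forall>x\<in>Om. (\<lambda>t. pds is f (x + t *\<^sub>R axis i 1)) differentiable (at 0)))"

definition metric_hypersurface_data ::
  "(real^'n::finite) set \<Rightarrow> (real^'n \<Rightarrow> 'n \<Rightarrow> 'n \<Rightarrow> real) \<Rightarrow> (real^'n \<Rightarrow> 'n \<Rightarrow> real)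
   \<Rightarrow> (real^'n \<Rightarrow> real) \<Rightarrow> bool" where
  "metric_hypersurface_data Om g l l2 \<longleftrightarrow> open Om \<and>
     (\<forall>a b. smooth_on Om (\<lambda>x. g x a b)) \<and> (\<forall>a. smooth_on Om (\<lambda>x. l x a)) \<and> smooth_on Om l2 \<and>
     (\<forall>x\<in>Om. \<forall>a b. g x a b = g x b a) \<and>
     (\<forall>x\<in>Om. \<forall>(W::'n \<Rightarrow> real) (w::real).
        (\<forall>(Z::'n \<Rightarrow> real) (z::real).
           (\<Sum>a\<in>UNIV. \<Sum>b\<in>UNIV. g x a b * W a * Z b) + w * (\<Sum>b\<in>UNIV. l x b * Z b)
           + z * (\<Sum>a\<in>UNIV. l x a * W a) + w * z * l2 x = 0)
        \<longrightarrow> (W = (\<lambda>_. 0) \<and> w = 0))"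

text \<open>P, n, n2 are the components of the inverse of the form A.\<close>
definition inverse_data ::
  "(real^'n::finite) set \<Rightarrow> (real^'n \<Rightarrow> 'n \<Rightarrow> 'n \<Rightarrow> real) \<Rightarrow> (real^'n \<Rightarrow> 'n \<Rightarrow> real)
   \<Rightarrow> (real^'n \<Rightarrow> real) \<Rightarrow> (real^'n \<Rightarrow> 'n \<Rightarrow> 'n \<Rightarrow> real) \<Rightarrow> (real^'n \<Rightarrow> 'n \<Rightarrow> real)
   \<Rightarrow> (real^'n \<Rightarrow> real) \<Rightarrow> bool" where
  "inverse_data Om g l l2 P n n2 \<longleftrightarrow> (\<forall>x\<in>Om.
     (\<forall>a b. P x a b = P x b a) \<and>
     (\<forall>a. (\<Sum>b\<in>UNIV. g x a b * n x b) + n2 x * l x a = 0) \<and>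
     (\<Sum>a\<in>UNIV. l x a * n x a) + n2 x * l2 x = 1 \<and>
     (\<forall>a. (\<Sum>b\<in>UNIV. P x a b * l x b) + l2 x * n x a = 0) \<and>
     (\<forall>a c. (\<Sum>b\<in>UNIV. P x a b * g x b c) + n x a * l x c = (if a = c then 1 else 0)))"

definition FF :: "(real^'n::finite \<Rightarrow> 'n \<Rightarrow> real) \<Rightarrow> real^'n \<Rightarrow> 'n \<Rightarrow> 'n \<Rightarrow> real" where
  "FF l x a b = (pd a (\<lambda>y. l y b) x - pd b (\<lambda>y. l y a) x) / 2"

definition ss :: "(real^'n::finite \<Rightarrow> 'n \<Rightarrow> real) \<Rightarrow> (real^'n \<Rightarrow> 'n \<Rightarrow> real) \<Rightarrow> real^'n \<Rightarrow> 'n \<Rightarrow> real" where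
  "ss n l x b = (\<Sum>a\<in>UNIV. n x a * FF l x a b)"

text \<open>U = 1/2 Lie_n gamma + l (x)_s d n2.\<close>
definition UU :: "(real^'n::finite \<Rightarrow> 'n \<Rightarrow> 'n \<Rightarrow> real) \<Rightarrow> (real^'n \<Rightarrow> 'n \<Rightarrow> real)
   \<Rightarrow> (real^'n \<Rightarrow> 'n \<Rightarrow> real) \<Rightarrow> (real^'n \<Rightarrow> real) \<Rightarrow> real^'n \<Rightarrow> 'n \<Rightarrow> 'n \<Rightarrow> real" where
  "UU g l n n2 x a b =
     (\<Sum>c\<in>UNIV. n x c * pd c (\<lambda>y. g y a b) x + g x c b * pd a (\<lambda>y. n y c) x
                + g x a c * pd b (\<lambda>y. n y c) x) / 2
     + (l x a * pd b n2 x + l x b * pd a n2 x) / 2"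

definition cov1 :: "(real^'n::finite \<Rightarrow> 'n \<Rightarrow> 'n \<Rightarrow> 'n \<Rightarrow> real) \<Rightarrow> (real^'n \<Rightarrow> 'n \<Rightarrow> real)
   \<Rightarrow> real^'n \<Rightarrow> 'n \<Rightarrow> 'n \<Rightarrow> real" where
  "cov1 G w x a b = pd a (\<lambda>y. w y b) x - (\<Sum>c\<in>UNIV. G x c a b * w x c)"

definition cov2 :: "(real^'n::finite \<Rightarrow> 'n \<Rightarrow> 'n \<Rightarrow> 'n \<Rightarrow> real) \<Rightarrow> (real^'n \<Rightarrow> 'n \<Rightarrow> 'n \<Rightarrow> real)
   \<Rightarrow> real^'n \<Rightarrow> 'n \<Rightarrow> 'n \<Rightarrow> 'n \<Rightarrow> real" where
  "cov2 G T x a b c = pd a (\<lambda>y. T y b c) x - (\<Sum>e\<in>UNIV. G x e a b * T x e c)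
     - (\<Sum>e\<in>UNIV. G x e a c * T x b e)"

definition covv :: "(real^'n::finite \<Rightarrow> 'n \<Rightarrow> 'n \<Rightarrow> 'n \<Rightarrow> real) \<Rightarrow> (real^'n \<Rightarrow> 'n \<Rightarrow> real)
   \<Rightarrow> real^'n \<Rightarrow> 'n \<Rightarrow> 'n \<Rightarrow> real" where
  "covv G V x a d = pd a (\<lambda>y. V y d) x + (\<Sum>c\<in>UNIV. G x d a c * V x c)"

definition nablaXW :: "(real^'n::finite \<Rightarrow> 'n \<Rightarrow> 'n \<Rightarrow> 'n \<Rightarrow> real) \<Rightarrow> (real^'n \<Rightarrow> 'n \<Rightarrow> real)
   \<Rightarrow> (real^'n \<Rightarrow> 'n \<Rightarrow> real) \<Rightarrow> real^'n \<Rightarrow> 'n \<Rightarrow> real" where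
  "nablaXW G X W x d = (\<Sum>a\<in>UNIV. X x a * covv G W x a d)"

definition hess :: "(real^'n::finite \<Rightarrow> 'n \<Rightarrow> 'n \<Rightarrow> 'n \<Rightarrow> real) \<Rightarrow> (real^'n \<Rightarrow> real)
   \<Rightarrow> real^'n \<Rightarrow> 'n \<Rightarrow> 'n \<Rightarrow> real" where
  "hess G f x a b = pd a (pd b f) x - (\<Sum>c\<in>UNIV. G x c a b * pd c f x)"

definition lieV :: "(real^'n::finite \<Rightarrow> 'n \<Rightarrow> real) \<Rightarrow> (real^'n \<Rightarrow> 'n \<Rightarrow> real) \<Rightarrow> real^'n \<Rightarrow> 'n \<Rightarrow> real" where
  "lieV n W x d = (\<Sum>c\<in>UNIV. n x c * pd c (\<lambda>y. W y d) x - W x c * pd c (\<lambda>y. n y d) x)"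

definition Sigma_circ :: "(real^'n::finite \<Rightarrow> 'n \<Rightarrow> 'n \<Rightarrow> 'n \<Rightarrow> real) \<Rightarrow> (real^'n \<Rightarrow> 'n \<Rightarrow> real)
   \<Rightarrow> (real^'n \<Rightarrow> 'n \<Rightarrow> real) \<Rightarrow> (real^'n \<Rightarrow> 'n \<Rightarrow> real) \<Rightarrow> real^'n \<Rightarrow> 'n \<Rightarrow> real" where
  "Sigma_circ G n X W x d = lieV n (nablaXW G X W) x d - nablaXW G X (lieV n W) x d
     - nablaXW G (lieV n X) W x d"

definition circ_connection ::
  "(real^'n::finite) set \<Rightarrow> (real^'n \<Rightarrow> 'n \<Rightarrow> 'n \<Rightarrow> real) \<Rightarrow> (real^'n \<Rightarrow> 'n \<Rightarrow> real)
   \<Rightarrow> (real^'n \<Rightarrow> real) \<Rightarrow> (real^'n \<Rightarrow> 'n \<Rightarrow> real) \<Rightarrow> (real^'n \<Rightarrow> real)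
   \<Rightarrow> (real^'n \<Rightarrow> 'n \<Rightarrow> 'n \<Rightarrow> 'n \<Rightarrow> real) \<Rightarrow> bool" where
  "circ_connection Om g l l2 n n2 G \<longleftrightarrow>
     (\<forall>d a b. smooth_on Om (\<lambda>x. G x d a b)) \<and>
     (\<forall>x\<in>Om. \<forall>d a b. G x d a b = G x d b a) \<and>
     (\<forall>x\<in>Om. \<forall>a b c. cov2 G g x a b c = - UU g l n n2 x a b * l x c - UU g l n n2 x a c * l x b) \<and>
     (\<forall>x\<in>Om. \<forall>a b. cov1 G l x a b + cov1 G l x b a = - 2 * l2 x * UU g l n n2 x a b)"

definition rhs :: "(real^'n::finite \<Rightarrow> 'n \<Rightarrow> 'n \<Rightarrow> real) \<Rightarrow> (real^'n \<Rightarrow> 'n \<Rightarrow> real)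
   \<Rightarrow> (real^'n \<Rightarrow> real) \<Rightarrow> (real^'n \<Rightarrow> 'n \<Rightarrow> 'n \<Rightarrow> real) \<Rightarrow> (real^'n \<Rightarrow> 'n \<Rightarrow> real)
   \<Rightarrow> (real^'n \<Rightarrow> real) \<Rightarrow> (real^'n \<Rightarrow> 'n \<Rightarrow> 'n \<Rightarrow> 'n \<Rightarrow> real)
   \<Rightarrow> real^'n \<Rightarrow> 'n \<Rightarrow> 'n \<Rightarrow> 'n \<Rightarrow> real" where
  "rhs g l l2 P n n2 G x d a b =
     n x d * ( cov1 G (ss n l) x a b + cov1 G (ss n l) x b a
             - n2 x * hess G l2 x a b
             - (pd a n2 x * pd b l2 x + pd b n2 x * pd a l2 x)
             + (\<Sum>c\<in>UNIV. n x c * pd c l2 x) * UU g l n n2 x a b )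
   + (\<Sum>c\<in>UNIV. P x d c *
        ( cov2 G (UU g l n n2) x a b c + cov2 G (UU g l n n2) x b c a - cov2 G (UU g l n n2) x c a b
        + (2 * ss n l x c - n2 x * pd c l2 x) * UU g l n n2 x a b
        + (FF l x c a * pd b n2 x + FF l x c b * pd a n2 x)))"

end

theory Submission
  imports Defs
begin


definition dif :: "'n::finite \<Rightarrow> (real^'n \<Rightarrow> real) \<Rightarrow> real^'n \<Rightarrow> bool" where
  "dif i f x \<longleftrightarrow> (\<lambda>t. f (x + t *\<^sub>R axis i 1)) differentiable (at 0)"

lemma dif_D: "dif i f x \<Longrightarrow> ((\<lambda>t. f (x + t *\<^sub>R axis i 1)) has_field_derivative pd i f x) (at 0)"
  unfolding dif_def pd_def using DERIV_deriv_iff_real_differentiable by blast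

lemma dif_I: "((\<lambda>t. f (x + t *\<^sub>R axis i 1)) has_field_derivative D) (at 0) \<Longrightarrow> dif i f x"
  unfolding dif_def using real_differentiable_def by blast

lemma pd_I: "((\<lambda>t. f (x + t *\<^sub>R axis i 1)) has_field_derivative D) (at 0) \<Longrightarrow> pd i f x = D"
  unfolding pd_def by (rule DERIV_imp_deriv)

lemma pd_const[simp]: "pd i (\<lambda>y. c) x = 0"
  by (rule pd_I) auto

lemma dif_const[simp]: "dif i (\<lambda>y. c) x"
  by (rule dif_I[where D=0]) auto

lemma pd_add[simp]: "dif i f x \<Longrightarrow> dif i g x \<Longrightarrow> pd i (\<lambda>y. f y + g y) x = pd i f x + pd i g x"
  by (rule pd_I) (auto intro!: derivative_eq_intros dif_D)

lemma dif_add[simp]: "dif i f x \<Longrightarrow> dif i g x \<Longrightarrow> dif i (\<lambda>y. f y + g y) x"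
  by (rule dif_I) (auto intro!: derivative_eq_intros dif_D)

lemma pd_diff[simp]: "dif i f x \<Longrightarrow> dif i g x \<Longrightarrow> pd i (\<lambda>y. f y - g y) x = pd i f x - pd i g x"
  by (rule pd_I) (auto intro!: derivative_eq_intros dif_D)

lemma dif_diff[simp]: "dif i f x \<Longrightarrow> dif i g x \<Longrightarrow> dif i (\<lambda>y. f y - g y) x"
  by (rule dif_I) (auto intro!: derivative_eq_intros dif_D)

lemma pd_minus[simp]: "dif i f x \<Longrightarrow> pd i (\<lambda>y. - f y) x = - pd i f x"
  by (rule pd_I) (auto intro!: derivative_eq_intros dif_D)

lemma dif_minus[simp]: "dif i f x \<Longrightarrow> dif i (\<lambda>y. - f y) x"
  by (rule dif_I) (auto intro!: derivative_eq_intros dif_D)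

lemma pd_mult[simp]: "dif i f x \<Longrightarrow> dif i g x \<Longrightarrow> pd i (\<lambda>y. f y * g y) x = pd i f x * g x + f x * pd i g x"
  by (rule pd_I) (auto intro!: derivative_eq_intros dif_D)

lemma dif_mult[simp]: "dif i f x \<Longrightarrow> dif i g x \<Longrightarrow> dif i (\<lambda>y. f y * g y) x"
  by (rule dif_I) (auto intro!: derivative_eq_intros dif_D)

lemma pd_divc[simp]: "dif i f x \<Longrightarrow> pd i (\<lambda>y. f y / c) x = pd i f x / c"
  using pd_mult[of i f x "\<lambda>_. inverse c"] by (simp add: divide_inverse)

lemma dif_divc[simp]: "dif i f x \<Longrightarrow> dif i (\<lambda>y. f y / c) x"
  using dif_mult[of i f x "\<lambda>_. inverse c"] by (simp add: divide_inverse)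

lemma pd_sum[simp]: "(\<And>k. k \<in> S \<Longrightarrow> dif i (f k) x) \<Longrightarrow>
   pd i (\<lambda>y. \<Sum>k\<in>S. f k y) x = (\<Sum>k\<in>S. pd i (f k) x)"
  by (rule pd_I) (auto intro!: derivative_eq_intros dif_D)

lemma dif_sum[simp]: "(\<And>k. k \<in> S \<Longrightarrow> dif i (f k) x) \<Longrightarrow> dif i (\<lambda>y. \<Sum>k\<in>S. f k y) x"
  by (rule dif_I) (auto intro!: derivative_eq_intros dif_D)

lemma pd_cong:
  assumes "open Om" "x \<in> Om" "\<And>y. y \<in> Om \<Longrightarrow> f y = g y"
  shows "pd i f x = pd i g x"
proof -
  obtain r where r: "r > 0" "ball x r \<subseteq> Om" using assms(1,2) open_contains_ball by blast
  have "eventually (\<lambda>t. f (x + t *\<^sub>R axis i 1) = g (x + t *\<^sub>R axis i 1)) (nhds 0)"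
    unfolding eventually_nhds_metric
  proof (intro exI[of _ r] conjI allI impI)
    fix t :: real assume "dist t 0 < r"
    then have "x + t *\<^sub>R axis i 1 \<in> ball x r" by (simp add: dist_norm)
    then show "f (x + t *\<^sub>R axis i 1) = g (x + t *\<^sub>R axis i 1)" using r assms(3) by blast
  qed (use r in auto)
  then show ?thesis unfolding pd_def by (rule deriv_cong_ev) simp
qed

lemma smooth_dif: "smooth_on Om f \<Longrightarrow> y \<in> Om \<Longrightarrow> dif i f y"
  unfolding smooth_on_def dif_def by (metis pds.simps(1))

lemma smooth_dif1: "smooth_on Om f \<Longrightarrow> y \<in> Om \<Longrightarrow> dif i (pd j f) y"
  unfolding smooth_on_def dif_def by (metis pds.simps)

lemma smooth_cont2: "smooth_on Om f \<Longrightarrow> continuous_on Om (pd a (pd b f))"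
  unfolding smooth_on_def by (metis pds.simps)

lemma DERIV_along:
  assumes "dif i f (p + s *\<^sub>R axis i 1)"
  shows "((\<lambda>s. f (p + s *\<^sub>R axis i 1)) has_real_derivative pd i f (p + s *\<^sub>R axis i 1)) (at s)"
proof -
  have "((\<lambda>r. f ((p + s *\<^sub>R axis i 1) + r *\<^sub>R axis i 1)) has_real_derivative pd i f (p + s *\<^sub>R axis i 1)) (at 0)"
    using dif_D[OF assms] .
  then have "((\<lambda>r. f (p + (r + s) *\<^sub>R axis i 1)) has_real_derivative pd i f (p + s *\<^sub>R axis i 1)) (at 0)"
    by (simp add: algebra_simps scaleR_add_left)
  then show ?thesis using DERIV_shift[of "\<lambda>s. f (p + s *\<^sub>R axis i 1)" _ 0 s] by simp
qed

lemma mixed_mvt: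
  fixes x :: "real^'n::finite"
  assumes f: "smooth_on Om f" and h: "h > 0"
    and box: "\<And>s t. 0 \<le> s \<Longrightarrow> s \<le> h \<Longrightarrow> 0 \<le> t \<Longrightarrow> t \<le> h \<Longrightarrow>
         x + s *\<^sub>R axis a 1 + t *\<^sub>R axis b 1 \<in> Om"
  shows "\<exists>s t. 0 < s \<and> s < h \<and> 0 < t \<and> t < h \<and>
    f (x + h *\<^sub>R axis a 1 + h *\<^sub>R axis b 1) - f (x + h *\<^sub>R axis a 1) - f (x + h *\<^sub>R axis b 1) + f x
      = h * h * pd b (pd a f) (x + s *\<^sub>R axis a 1 + t *\<^sub>R axis b 1)"
proof -
  define u where "u = (axis a 1 :: real^'n)"
  define v where "v = (axis b 1 :: real^'n)"
  define k where "k s = f ((x + h *\<^sub>R v) + s *\<^sub>R u) - f (x + s *\<^sub>R u)" for s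
  have "DERIV k s :> pd a f ((x + h *\<^sub>R v) + s *\<^sub>R u) - pd a f (x + s *\<^sub>R u)"
    if "0 \<le> s" "s \<le> h" for s
  proof -
    have i1: "(x + h *\<^sub>R v) + s *\<^sub>R u \<in> Om" using box[of s h] that h
      by (simp add: u_def v_def algebra_simps)
    have i2: "x + s *\<^sub>R u \<in> Om" using box[of s 0] that h by (simp add: u_def v_def)
    show ?thesis unfolding k_def u_def
      by (intro derivative_intros DERIV_along smooth_dif[OF f]) (use i1 i2 in \<open>auto simp: u_def\<close>)
  qed
  from MVT2[OF h this] obtain s where s: "0 < s" "s < h"
    "k h - k 0 = (h - 0) * (pd a f ((x + h *\<^sub>R v) + s *\<^sub>R u) - pd a f (x + s *\<^sub>R u))" by blast
  define m where "m t = pd a f ((x + s *\<^sub>R u) + t *\<^sub>R v)" for t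
  have "DERIV m t :> pd b (pd a f) ((x + s *\<^sub>R u) + t *\<^sub>R v)" if "0 \<le> t" "t \<le> h" for t
  proof -
    have i1: "(x + s *\<^sub>R u) + t *\<^sub>R v \<in> Om" using box[of s t] that s
      by (simp add: u_def v_def algebra_simps)
    show ?thesis unfolding m_def v_def
      by (intro DERIV_along smooth_dif1[OF f]) (use i1 in \<open>auto simp: v_def\<close>)
  qed
  from MVT2[OF h this] obtain t where t: "0 < t" "t < h"
    "m h - m 0 = (h - 0) * pd b (pd a f) ((x + s *\<^sub>R u) + t *\<^sub>R v)" by blast
  have "f (x + h *\<^sub>R u + h *\<^sub>R v) - f (x + h *\<^sub>R u) - f (x + h *\<^sub>R v) + f x = k h - k 0"
    by (simp add: k_def algebra_simps)
  also have "\<dots> = h * (m h - m 0)" using s(3) by (simp add: m_def algebra_simps)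
  also have "\<dots> = h * h * pd b (pd a f) (x + s *\<^sub>R u + t *\<^sub>R v)" using t(3) by simp
  finally show ?thesis using s t unfolding u_def v_def by blast
qed

lemma schwarz:
  fixes x :: "real^'n::finite"
  assumes Om: "open Om" "x \<in> Om" and f: "smooth_on Om f"
  shows "pd a (pd b f) x = pd b (pd a f) x"
proof -
  define A where "A = pd b (pd a f)"
  define B where "B = pd a (pd b f)"
  have cA: "isCont A x" using smooth_cont2[OF f, of b a] Om continuous_on_eq_continuous_at
    unfolding A_def by blast
  have cB: "isCont B x" using smooth_cont2[OF f, of a b] Om continuous_on_eq_continuous_at
    unfolding B_def by blast
  have "\<bar>B x - A x\<bar> < 2 * e" if e: "e > 0" for e
  proof -
    obtain d1 where d1: "d1 > 0" "\<And>y. dist y x < d1 \<Longrightarrow> dist (A y) (A x) < e"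
      using cA e unfolding continuous_at_eps_delta by blast
    obtain d2 where d2: "d2 > 0" "\<And>y. dist y x < d2 \<Longrightarrow> dist (B y) (B x) < e"
      using cB e unfolding continuous_at_eps_delta by blast
    obtain r where r: "r > 0" "ball x r \<subseteq> Om" using Om open_contains_ball by blast
    define h where "h = min r (min d1 d2) / 4"
    have h: "h > 0" using r d1 d2 by (simp add: h_def)
    have near: "dist (x + s *\<^sub>R axis i 1 + t *\<^sub>R axis j 1) x \<le> 2 * h"
      if "0 \<le> s" "s \<le> h" "0 \<le> t" "t \<le> h" for s t and i j :: 'n
    proof -
      have "dist (x + s *\<^sub>R axis i 1 + t *\<^sub>R axis j 1) x = norm (s *\<^sub>R axis i (1::real) + t *\<^sub>R axis j 1)"
        by (simp add: dist_norm)
      also have "\<dots> \<le> norm (s *\<^sub>R axis i (1::real)) + norm (t *\<^sub>R axis j (1::real))" by (rule norm_triangle_ineq)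
      also have "\<dots> = s + t" using that by simp
      finally show ?thesis using that by simp
    qed
    have hr: "2 * h < r" "2 * h < d1" "2 * h < d2" using r d1 d2 by (auto simp: h_def)
    have box: "x + s *\<^sub>R axis i 1 + t *\<^sub>R axis j 1 \<in> Om"
      if "0 \<le> s" "s \<le> h" "0 \<le> t" "t \<le> h" for s t and i j :: 'n
      using near[OF that, of i j] hr r by (auto simp: dist_commute)
    obtain s t where st: "0 < s" "s < h" "0 < t" "t < h"
      "f (x + h *\<^sub>R axis a 1 + h *\<^sub>R axis b 1) - f (x + h *\<^sub>R axis a 1) - f (x + h *\<^sub>R axis b 1) + f x
      = h * h * A (x + s *\<^sub>R axis a 1 + t *\<^sub>R axis b 1)"
      using mixed_mvt[OF f h box] unfolding A_def by blast
    obtain s' t' where st': "0 < s'" "s' < h" "0 < t'" "t' < h"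
      "f (x + h *\<^sub>R axis b 1 + h *\<^sub>R axis a 1) - f (x + h *\<^sub>R axis b 1) - f (x + h *\<^sub>R axis a 1) + f x
      = h * h * B (x + s' *\<^sub>R axis b 1 + t' *\<^sub>R axis a 1)"
      using mixed_mvt[OF f h box] unfolding B_def by blast
    have "h * h * A (x + s *\<^sub>R axis a 1 + t *\<^sub>R axis b 1) = h * h * B (x + s' *\<^sub>R axis b 1 + t' *\<^sub>R axis a 1)"
      using st(5) st'(5) by (simp add: algebra_simps)
    then have eq: "A (x + s *\<^sub>R axis a 1 + t *\<^sub>R axis b 1) = B (x + s' *\<^sub>R axis b 1 + t' *\<^sub>R axis a 1)"
      using h by simp
    have "dist (A (x + s *\<^sub>R axis a 1 + t *\<^sub>R axis b 1)) (A x) < e"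
      using d1(2) near[of s t a b] st hr by simp
    moreover have "dist (B (x + s' *\<^sub>R axis b 1 + t' *\<^sub>R axis a 1)) (B x) < e"
      using d2(2) near[of s' t' b a] st' hr by simp
    ultimately show ?thesis using eq by (simp add: dist_real_def)
  qed
  then have "B x = A x"
  proof -
    assume H: "\<And>e. e > 0 \<Longrightarrow> \<bar>B x - A x\<bar> < 2 * e"
    show ?thesis
    proof (rule ccontr)
      assume "B x \<noteq> A x"
      then have "\<bar>B x - A x\<bar> / 2 > 0" by simp
      from H[OF this] show False by simp
    qed
  qed
  then show ?thesis unfolding A_def B_def .
qed



definition lie1 :: "(real^'n::finite \<Rightarrow> 'n \<Rightarrow> real) \<Rightarrow> (real^'n \<Rightarrow> 'n \<Rightarrow> real) \<Rightarrow> real^'n \<Rightarrow> 'n \<Rightarrow> real" where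
  "lie1 n w y b = (\<Sum>e\<in>UNIV. n y e * pd e (\<lambda>z. w z b) y) + (\<Sum>e\<in>UNIV. w y e * pd b (\<lambda>z. n z e) y)"

definition lie2 :: "(real^'n::finite \<Rightarrow> 'n \<Rightarrow> real) \<Rightarrow> (real^'n \<Rightarrow> 'n \<Rightarrow> 'n \<Rightarrow> real) \<Rightarrow> real^'n \<Rightarrow> 'n \<Rightarrow> 'n \<Rightarrow> real" where
  "lie2 n T y a b = (\<Sum>e\<in>UNIV. n y e * pd e (\<lambda>z. T z a b) y) + (\<Sum>e\<in>UNIV. T y e b * pd a (\<lambda>z. n z e) y)
      + (\<Sum>e\<in>UNIV. T y a e * pd b (\<lambda>z. n z e) y)"

definition lie3 :: "(real^'n::finite \<Rightarrow> 'n \<Rightarrow> real) \<Rightarrow> (real^'n \<Rightarrow> 'n \<Rightarrow> 'n \<Rightarrow> 'n \<Rightarrow> real) \<Rightarrow> real^'n \<Rightarrow> 'n \<Rightarrow> 'n \<Rightarrow> 'n \<Rightarrow> real" where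
  "lie3 n T y a b c = (\<Sum>e\<in>UNIV. n y e * pd e (\<lambda>z. T z a b c) y) + (\<Sum>e\<in>UNIV. T y e b c * pd a (\<lambda>z. n z e) y)
      + (\<Sum>e\<in>UNIV. T y a e c * pd b (\<lambda>z. n z e) y) + (\<Sum>e\<in>UNIV. T y a b e * pd c (\<lambda>z. n z e) y)"

definition SigN :: "(real^'n::finite \<Rightarrow> 'n \<Rightarrow> 'n \<Rightarrow> 'n \<Rightarrow> real) \<Rightarrow> (real^'n \<Rightarrow> 'n \<Rightarrow> real) \<Rightarrow> real^'n \<Rightarrow> 'n \<Rightarrow> 'n \<Rightarrow> 'n \<Rightarrow> real" where
  "SigN G n x d a b = (\<Sum>e\<in>UNIV. n x e * pd e (\<lambda>z. G z d a b) x) - (\<Sum>e\<in>UNIV. G x e a b * pd e (\<lambda>z. n z d) x)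
     + (\<Sum>e\<in>UNIV. G x d e b * pd a (\<lambda>z. n z e) x) + (\<Sum>e\<in>UNIV. G x d a e * pd b (\<lambda>z. n z e) x)
     + pd a (pd b (\<lambda>z. n z d)) x"

lemma comm2:
  fixes T :: "real^'n::finite \<Rightarrow> 'n \<Rightarrow> 'n \<Rightarrow> real"
  assumes dT: "\<forall>i a b. dif i (\<lambda>z. T z a b) x" and dT1: "\<forall>i j a b. dif i (pd j (\<lambda>z. T z a b)) x"
    and dn: "\<forall>i a. dif i (\<lambda>z. n z a) x" and dn1: "\<forall>i j a. dif i (pd j (\<lambda>z. n z a)) x"
    and dG: "\<forall>i d a b. dif i (\<lambda>z. G z d a b) x"
    and sT: "\<forall>i j a b. pd i (pd j (\<lambda>z. T z a b)) x = pd j (pd i (\<lambda>z. T z a b)) x"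
  shows "lie3 n (cov2 G T) x a b c - cov2 G (lie2 n T) x a b c
     = - (\<Sum>f\<in>UNIV. SigN G n x f a b * T x f c) - (\<Sum>f\<in>UNIV. SigN G n x f a c * T x b f)"
  unfolding lie3_def cov2_def lie2_def SigN_def
  apply (simp add: dT dT1 dn dn1 dG)
  apply (simp add: sum_distrib_left sum_distrib_right sum_subtractf sum.distrib sum_negf algebra_simps)
  apply (subst (1 2 3 4 5 6 7 8 9 10 11 12) sum.swap)
  apply (simp add: sT add_ac)
  done

lemma comm1:
  fixes w :: "real^'n::finite \<Rightarrow> 'n \<Rightarrow> real"
  assumes dT: "\<forall>i a. dif i (\<lambda>z. w z a) x" and dT1: "\<forall>i j a. dif i (pd j (\<lambda>z. w z a)) x"
    and dn: "\<forall>i a. dif i (\<lambda>z. n z a) x" and dn1: "\<forall>i j a. dif i (pd j (\<lambda>z. n z a)) x"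
    and dG: "\<forall>i d a b. dif i (\<lambda>z. G z d a b) x"
    and sT: "\<forall>i j a. pd i (pd j (\<lambda>z. w z a)) x = pd j (pd i (\<lambda>z. w z a)) x"
  shows "lie2 n (cov1 G w) x a b - cov1 G (lie1 n w) x a b = - (\<Sum>f\<in>UNIV. SigN G n x f a b * w x f)"
  unfolding lie2_def cov1_def lie1_def SigN_def
  apply (simp add: dT dT1 dn dn1 dG)
  apply (simp add: sum_distrib_left sum_distrib_right sum_subtractf sum.distrib sum_negf algebra_simps)
  apply (subst (1 2 3 4 5) sum.swap)
  apply (simp add: sT add_ac)
  done

lemma rot3: "(\<Sum>i\<in>A. \<Sum>j\<in>B. \<Sum>k\<in>C. F i j k) = (\<Sum>j\<in>B. \<Sum>k\<in>C. \<Sum>i\<in>A. F i j k)"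
  by (subst sum.swap) (simp add: sum.swap[of _ A C])

lemma sw23: "(\<Sum>i\<in>A. \<Sum>j\<in>B. \<Sum>k\<in>C. F i j k) = (\<Sum>i\<in>A. \<Sum>k\<in>C. \<Sum>j\<in>B. F i j k)"
  by (simp add: sum.swap[of _ B C])

lemma step1:
  fixes X W :: "real^'n::finite \<Rightarrow> 'n \<Rightarrow> real"
  assumes dX: "\<forall>i a. dif i (\<lambda>z. X z a) x" 
    and dW: "\<forall>i a. dif i (\<lambda>z. W z a) x" and dW1: "\<forall>i j a. dif i (pd j (\<lambda>z. W z a)) x"
    and dn: "\<forall>i a. dif i (\<lambda>z. n z a) x" and dn1: "\<forall>i j a. dif i (pd j (\<lambda>z. n z a)) x"
    and dG: "\<forall>i d a b. dif i (\<lambda>z. G z d a b) x"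
    and sW: "\<forall>i j a. pd i (pd j (\<lambda>z. W z a)) x = pd j (pd i (\<lambda>z. W z a)) x"
  shows "Sigma_circ G n X W x d = (\<Sum>a\<in>UNIV. \<Sum>b\<in>UNIV. SigN G n x d a b * X x a * W x b)"
  unfolding Sigma_circ_def lieV_def nablaXW_def covv_def SigN_def
  apply (simp add: dX dW dW1 dn dn1 dG)
  apply (simp add: sum_distrib_left sum_distrib_right sum_subtractf sum.distrib sum_negf algebra_simps)
  apply (subst (1 2 3 4) sum.swap)
  apply (subst (1 2 4 6) rot3)
  apply (subst (3) sw23)
  apply (subst (5) rot3)
  apply (subst (5) rot3)
  apply (simp add: sW add_ac mult_ac)
  apply (rule sw23)
  done



lemma lie3_prod:
  fixes A :: "real^'n::finite \<Rightarrow> 'n \<Rightarrow> 'n \<Rightarrow> real" and B :: "real^'n \<Rightarrow> 'n \<Rightarrow> real"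
  assumes dA: "\<forall>i a b. dif i (\<lambda>z. A z a b) x" and dB: "\<forall>i a. dif i (\<lambda>z. B z a) x"
    and dn: "\<forall>i a. dif i (\<lambda>z. n z a) x"
  shows "lie3 n (\<lambda>y a b c. - A y a b * B y c - A y a c * B y b) x a b c
    = - (lie2 n A x a b * B x c + A x a b * lie1 n B x c) - (lie2 n A x a c * B x b + A x a c * lie1 n B x b)"
  unfolding lie3_def lie2_def lie1_def
  by (simp add: dA dB dn sum_distrib_left sum_distrib_right sum_subtractf sum.distrib sum_negf algebra_simps)

lemma cov2_prod:
  fixes U :: "real^'n::finite \<Rightarrow> 'n \<Rightarrow> 'n \<Rightarrow> real" and l :: "real^'n \<Rightarrow> 'n \<Rightarrow> real"
  assumes dU: "\<forall>i a b. dif i (\<lambda>z. U z a b) x" and dl: "\<forall>i a. dif i (\<lambda>z. l z a) x"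
    and dn2: "\<forall>i. dif i n2 x" and dn21: "\<forall>i j. dif i (pd j n2) x"
  shows "cov2 G (\<lambda>y b c. 2 * U y b c - l y b * pd c n2 y - l y c * pd b n2 y) x a b c
    = 2 * cov2 G U x a b c - (cov1 G l x a b * pd c n2 x + l x b * hess G n2 x a c)
      - (cov1 G l x a c * pd b n2 x + l x c * hess G n2 x a b)"
  unfolding cov2_def cov1_def hess_def
  by (simp add: dU dl dn2 dn21 sum_distrib_left sum_distrib_right sum_subtractf sum.distrib sum_negf algebra_simps)

lemma lie2_scal:
  fixes A :: "real^'n::finite \<Rightarrow> 'n \<Rightarrow> 'n \<Rightarrow> real"
  assumes dA: "\<forall>i a b. dif i (\<lambda>z. A z a b) x" and df: "\<forall>i. dif i f x"
    and dn: "\<forall>i a. dif i (\<lambda>z. n z a) x"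
  shows "lie2 n (\<lambda>y a b. - 2 * f y * A y a b) x a b
    = - 2 * ((\<Sum>c\<in>UNIV. n x c * pd c f x) * A x a b + f x * lie2 n A x a b)"
  unfolding lie2_def
  by (simp add: dA df dn sum_distrib_left sum_distrib_right sum_subtractf sum.distrib sum_negf algebra_simps)

lemma lie2_symm:
  fixes A :: "real^'n::finite \<Rightarrow> 'n \<Rightarrow> 'n \<Rightarrow> real"
  assumes dA: "\<forall>i a b. dif i (\<lambda>z. A z a b) x"
  shows "lie2 n (\<lambda>y a b. A y a b + A y b a) x a b = lie2 n A x a b + lie2 n A x b a"
  unfolding lie2_def
  by (simp add: dA sum_distrib_left sum_distrib_right sum_subtractf sum.distrib sum_negf algebra_simps)

lemma lie3_cong:
  assumes "open Om" "x \<in> Om" "\<And>y a b c. y \<in> Om \<Longrightarrow> T y a b c = T' y a b c"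
  shows "lie3 n T x a b c = lie3 n T' x a b c"
proof -
  have "pd e (\<lambda>z. T z a b c) x = pd e (\<lambda>z. T' z a b c) x" for e a b c
    by (rule pd_cong[OF assms(1,2)]) (simp add: assms(3))
  then show ?thesis unfolding lie3_def using assms(2,3) by simp
qed

lemma lie2_cong:
  assumes "open Om" "x \<in> Om" "\<And>y a b. y \<in> Om \<Longrightarrow> T y a b = T' y a b"
  shows "lie2 n T x a b = lie2 n T' x a b"
proof -
  have "pd e (\<lambda>z. T z a b) x = pd e (\<lambda>z. T' z a b) x" for e a b
    by (rule pd_cong[OF assms(1,2)]) (simp add: assms(3))
  then show ?thesis unfolding lie2_def using assms(2,3) by simp
qed

lemma cov1_cong:
  assumes "open Om" "x \<in> Om" "\<And>y b. y \<in> Om \<Longrightarrow> w y b = w' y b"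
  shows "cov1 G w x a b = cov1 G w' x a b"
proof -
  have "pd e (\<lambda>z. w z b) x = pd e (\<lambda>z. w' z b) x" for e b
    by (rule pd_cong[OF assms(1,2)]) (simp add: assms(3))
  then show ?thesis unfolding cov1_def using assms(2,3) by simp
qed

lemma cov1_prod_grad:
  assumes dn2: "\<forall>i. dif i n2 x" and dn21: "\<forall>i j. dif i (pd j n2) x"
    and dl2: "\<forall>i. dif i l2 x" and dl21: "\<forall>i j. dif i (pd j l2) x"
  shows "cov1 G (\<lambda>y b. pd b n2 y * l2 y + n2 y * pd b l2 y) x a b
    = hess G n2 x a b * l2 x + pd b n2 x * pd a l2 x + pd a n2 x * pd b l2 x + n2 x * hess G l2 x a b"
  unfolding cov1_def hess_def
  by (simp add: dn2 dn21 dl2 dl21 sum_distrib_left sum_distrib_right sum_subtractf sum.distrib sum_negf algebra_simps)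

lemma delta_decomp:
  fixes S :: "'n::finite \<Rightarrow> real"
  assumes "\<forall>a c. (\<Sum>b\<in>UNIV. P a b * g b c) + n a * l c = (if a = c then 1 else 0)"
  shows "S d = (\<Sum>c\<in>UNIV. P d c * (\<Sum>f\<in>UNIV. g c f * S f)) + n d * (\<Sum>f\<in>UNIV. l f * S f)"
proof -
  have "S d = (\<Sum>f\<in>UNIV. (if d = f then 1 else 0) * S f)"
  proof -
    have "(\<Sum>f\<in>UNIV. (if d = f then 1 else 0) * S f) = (\<Sum>f\<in>UNIV. if d = f then S f else 0)"
      by (intro sum.cong) auto
    then show ?thesis by simp
  qed
  also have "\<dots> = (\<Sum>f\<in>UNIV. ((\<Sum>c\<in>UNIV. P d c * g c f) + n d * l f) * S f)"
    using assms by simp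
  also have "\<dots> = (\<Sum>f\<in>UNIV. \<Sum>c\<in>UNIV. P d c * (g c f * S f)) + (\<Sum>f\<in>UNIV. n d * (l f * S f))"
    by (simp add: distrib_right sum.distrib sum_distrib_right mult.assoc)
  also have "\<dots> = (\<Sum>c\<in>UNIV. \<Sum>f\<in>UNIV. P d c * (g c f * S f)) + (\<Sum>f\<in>UNIV. n d * (l f * S f))"
    by (subst sum.swap) (rule refl)
  also have "\<dots> = (\<Sum>c\<in>UNIV. P d c * (\<Sum>f\<in>UNIV. g c f * S f)) + n d * (\<Sum>f\<in>UNIV. l f * S f)"
    by (simp add: sum_distrib_left)
  finally show ?thesis .
qed



theorem lemma2p14:
  fixes Om :: "(real^'n::finite) set"
    and g :: "real^'n \<Rightarrow> 'n \<Rightarrow> 'n \<Rightarrow> real" and l :: "real^'n \<Rightarrow> 'n \<Rightarrow> real"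
    and l2 :: "real^'n \<Rightarrow> real"
    and P :: "real^'n \<Rightarrow> 'n \<Rightarrow> 'n \<Rightarrow> real" and n :: "real^'n \<Rightarrow> 'n \<Rightarrow> real"
    and n2 :: "real^'n \<Rightarrow> real"
    and G :: "real^'n \<Rightarrow> 'n \<Rightarrow> 'n \<Rightarrow> 'n \<Rightarrow> real"
    and X W :: "real^'n \<Rightarrow> 'n \<Rightarrow> real"
  assumes data: "metric_hypersurface_data Om g l l2"
    and inv: "inverse_data Om g l l2 P n n2"
    and smoothP: "\<forall>a b. smooth_on Om (\<lambda>x. P x a b)"
    and smoothn: "\<forall>a. smooth_on Om (\<lambda>x. n x a)"
    and smoothn2: "smooth_on Om n2"
    and conn: "circ_connection Om g l l2 n n2 G"
    and smoothX: "\<forall>a. smooth_on Om (\<lambda>x. X x a)"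
    and smoothW: "\<forall>a. smooth_on Om (\<lambda>x. W x a)"
    and x: "x \<in> Om"
  shows "Sigma_circ G n X W x d =
         (\<Sum>a\<in>UNIV. \<Sum>b\<in>UNIV. rhs g l l2 P n n2 G x d a b * X x a * W x b)"
proof -
  have Om: "open Om" using data by (simp add: metric_hypersurface_data_def)
  have sg: "\<forall>a b. smooth_on Om (\<lambda>x. g x a b)" using data by (simp add: metric_hypersurface_data_def)
  have sl: "\<forall>a. smooth_on Om (\<lambda>x. l x a)" using data by (simp add: metric_hypersurface_data_def)
  have sl2: "smooth_on Om l2" using data by (simp add: metric_hypersurface_data_def)
  have gsym: "\<forall>y\<in>Om. \<forall>a b. g y a b = g y b a" using data by (simp add: metric_hypersurface_data_def)
  have invn: "\<forall>y\<in>Om. (\<Sum>a\<in>UNIV. l y a * n y a) + n2 y * l2 y = 1"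
    using inv by (simp add: inverse_data_def)
  have invP: "\<forall>a c. (\<Sum>b\<in>UNIV. P x a b * g x b c) + n x a * l x c = (if a = c then 1 else 0)"
    using inv x by (simp add: inverse_data_def)
  have invPl: "\<forall>a. (\<Sum>b\<in>UNIV. P x a b * l x b) + l2 x * n x a = 0"
    using inv x by (simp add: inverse_data_def)
  have sG: "\<forall>d a b. smooth_on Om (\<lambda>x. G x d a b)" using conn by (simp add: circ_connection_def)
  have Gsym: "\<forall>y\<in>Om. \<forall>d a b. G y d a b = G y d b a" using conn by (simp add: circ_connection_def)
  have cg: "\<forall>y\<in>Om. \<forall>a b c. cov2 G g y a b c = - UU g l n n2 y a b * l y c - UU g l n n2 y a c * l y b"
    using conn by (simp add: circ_connection_def)
  have cl: "\<forall>y\<in>Om. \<forall>a b. cov1 G l y a b + cov1 G l y b a = - 2 * l2 y * UU g l n n2 y a b"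
    using conn by (simp add: circ_connection_def)

  have dg: "\<forall>i a b. dif i (\<lambda>z. g z a b) y" and dg1: "\<forall>i j a b. dif i (pd j (\<lambda>z. g z a b)) y" if "y \<in> Om" for y
    using sg that by (blast intro: smooth_dif smooth_dif1)+
  have dl: "\<forall>i a. dif i (\<lambda>z. l z a) y" and dl1: "\<forall>i j a. dif i (pd j (\<lambda>z. l z a)) y" if "y \<in> Om" for y
    using sl that by (blast intro: smooth_dif smooth_dif1)+
  have dn: "\<forall>i a. dif i (\<lambda>z. n z a) y" and dn1: "\<forall>i j a. dif i (pd j (\<lambda>z. n z a)) y" if "y \<in> Om" for y
    using smoothn that by (blast intro: smooth_dif smooth_dif1)+
  have dX: "\<forall>i a. dif i (\<lambda>z. X z a) y" if "y \<in> Om" for y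
    using smoothX that by (blast intro: smooth_dif)
  have dW: "\<forall>i a. dif i (\<lambda>z. W z a) y" and dW1: "\<forall>i j a. dif i (pd j (\<lambda>z. W z a)) y" if "y \<in> Om" for y
    using smoothW that by (blast intro: smooth_dif smooth_dif1)+
  have dG: "\<forall>i d a b. dif i (\<lambda>z. G z d a b) y" if "y \<in> Om" for y
    using sG that by (blast intro: smooth_dif)
  have dl2: "\<forall>i. dif i l2 y" and dl21: "\<forall>i j. dif i (pd j l2) y" if "y \<in> Om" for y
    using sl2 that by (blast intro: smooth_dif smooth_dif1)+
  have dn2: "\<forall>i. dif i n2 y" and dn21: "\<forall>i j. dif i (pd j n2) y" if "y \<in> Om" for y
    using smoothn2 that by (blast intro: smooth_dif smooth_dif1)+
  note dx = dg[OF x] dg1[OF x] dl[OF x] dl1[OF x] dn[OF x] dn1[OF x] dX[OF x] dW[OF x] dW1[OF x]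
    dG[OF x] dl2[OF x] dl21[OF x] dn2[OF x] dn21[OF x]

  have schg: "\<forall>i j a b. pd i (pd j (\<lambda>z. g z a b)) x = pd j (pd i (\<lambda>z. g z a b)) x"
    using sg by (blast intro: schwarz[OF Om x])
  have schl: "\<forall>i j a. pd i (pd j (\<lambda>z. l z a)) x = pd j (pd i (\<lambda>z. l z a)) x"
    using sl by (blast intro: schwarz[OF Om x])
  have schn: "\<forall>i j a. pd i (pd j (\<lambda>z. n z a)) x = pd j (pd i (\<lambda>z. n z a)) x"
    using smoothn by (blast intro: schwarz[OF Om x])
  have schW: "\<forall>i j a. pd i (pd j (\<lambda>z. W z a)) x = pd j (pd i (\<lambda>z. W z a)) x"
    using smoothW by (blast intro: schwarz[OF Om x])
  have schn2: "pd i (pd j n2) x = pd j (pd i n2) x" for i j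
    using smoothn2 by (blast intro: schwarz[OF Om x])
  have schl2: "pd i (pd j l2) x = pd j (pd i l2) x" for i j
    using sl2 by (blast intro: schwarz[OF Om x])

  define U where "U = UU g l n n2"
  have dU: "\<forall>i a b. dif i (\<lambda>z. U z a b) x"
    unfolding U_def UU_def by (simp add: dx)

  have Usym: "U y a b = U y b a" if y: "y \<in> Om" for y a b
  proof -
    have e: "pd c (\<lambda>z. g z a b) y = pd c (\<lambda>z. g z b a) y" for c
      by (rule pd_cong[OF Om y]) (simp add: gsym)
    have "g y c b = g y b c" "g y a c = g y c a" for c using gsym y by auto
    then show ?thesis unfolding U_def UU_def using e by (simp add: algebra_simps)
  qed
  have pdUsym: "pd e (\<lambda>z. U z a b) x = pd e (\<lambda>z. U z b a) x" for e a b
    by (rule pd_cong[OF Om x]) (simp add: Usym)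
  have Gx: "G x d a b = G x d b a" for d a b using Gsym x by auto
  have gx: "g x a b = g x b a" for a b using gsym x by auto
  have pdGsym: "pd e (\<lambda>z. G z d a b) x = pd e (\<lambda>z. G z d b a) x" for e d a b
    by (rule pd_cong[OF Om x]) (simp add: Gsym)
  have Sigsym: "SigN G n x d a b = SigN G n x d b a" for d a b
    unfolding SigN_def using schn pdGsym Gx by (simp add: algebra_simps)
  have hn2sym: "hess G n2 x a b = hess G n2 x b a" for a b
    unfolding hess_def using schn2 Gx by simp
  have hl2sym: "hess G l2 x a b = hess G l2 x b a" for a b
    unfolding hess_def using schl2 Gx by simp
  have C2sym: "cov2 G U x a b c = cov2 G U x a c b" for a b c
    unfolding cov2_def using pdUsym Usym[OF x] by (simp add: algebra_simps)
  have V2sym: "lie2 n U x a b = lie2 n U x b a" for a b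
    unfolding lie2_def using pdUsym Usym[OF x] by (simp add: algebra_simps)
  have FFl: "cov1 G l x c a - cov1 G l x a c = 2 * FF l x c a" for c a
    unfolding cov1_def FF_def using Gx by simp

  define K where "K a b c = (\<Sum>f\<in>UNIV. SigN G n x f a b * g x f c) + (\<Sum>f\<in>UNIV. SigN G n x f a c * g x b f)" for a b c
  have lieg: "lie2 n g = (\<lambda>y b c. 2 * U y b c - l y b * pd c n2 y - l y c * pd b n2 y)"
    by (intro ext) (simp add: lie2_def U_def UU_def sum.distrib field_simps)
  have Kform: "K a b c = 2 * cov2 G U x a b c - (cov1 G l x a b * pd c n2 x + l x b * hess G n2 x a c)
      - (cov1 G l x a c * pd b n2 x + l x c * hess G n2 x a b)
      + (lie2 n U x a b * l x c + U x a b * lie1 n l x c) + (lie2 n U x a c * l x b + U x a c * lie1 n l x b)"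
    for a b c
  proof -
    have c2: "lie3 n (cov2 G g) x a b c - cov2 G (lie2 n g) x a b c = - K a b c"
      unfolding K_def using comm2[of g x n G a b c] dx schg by simp
    have "lie3 n (cov2 G g) x a b c = lie3 n (\<lambda>y a b c. - U y a b * l y c - U y a c * l y b) x a b c"
      by (rule lie3_cong[OF Om x]) (simp add: cg U_def)
    also have "\<dots> = - (lie2 n U x a b * l x c + U x a b * lie1 n l x c) - (lie2 n U x a c * l x b + U x a c * lie1 n l x b)"
      by (rule lie3_prod) (use dU dx in auto)
    finally have e1: "lie3 n (cov2 G g) x a b c = \<dots>" .
    have e2: "cov2 G (lie2 n g) x a b c = 2 * cov2 G U x a b c - (cov1 G l x a b * pd c n2 x + l x b * hess G n2 x a c)
      - (cov1 G l x a c * pd b n2 x + l x c * hess G n2 x a b)"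
      unfolding lieg by (rule cov2_prod) (use dU dx in auto)
    show ?thesis using c2 e1 e2 by linarith
  qed
  define SL where "SL c a b = (\<Sum>f\<in>UNIV. g x c f * SigN G n x f a b)" for c a b
  have KSL: "K a b c = SL c a b + SL b a c" for a b c
    unfolding K_def SL_def by (simp add: gx mult.commute)
  have SLsym: "SL c a b = SL c b a" for c a b
    unfolding SL_def using Sigsym by simp
  have SLK: "SL c a b = (K a b c + K b a c - K c a b) / 2" for a b c
    using KSL[of a b c] KSL[of b a c] KSL[of c a b] SLsym[of c a b] SLsym[of b a c] SLsym[of a b c] by simp

  have lie1l: "lie1 n l y b = 2 * ss n l y b - (pd b n2 y * l2 y + n2 y * pd b l2 y)" if y: "y \<in> Om" for y b
  proof -
    have "pd b (\<lambda>z. (\<Sum>a\<in>UNIV. l z a * n z a) + n2 z * l2 z) y = pd b (\<lambda>z. 1) y"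
      by (rule pd_cong[OF Om y]) (simp add: invn)
    then have "(\<Sum>a\<in>UNIV. pd b (\<lambda>z. l z a) y * n y a + l y a * pd b (\<lambda>z. n z a) y)
        + (pd b n2 y * l2 y + n2 y * pd b l2 y) = 0"
      using dl[OF y] dn[OF y] dn2[OF y] dl2[OF y] by simp
    moreover have "2 * ss n l y b = (\<Sum>a\<in>UNIV. n y a * pd a (\<lambda>z. l z b) y - n y a * pd b (\<lambda>z. l z a) y)"
      unfolding ss_def FF_def sum_distrib_left by (rule sum.cong) (auto simp: field_simps)
    ultimately show ?thesis
      unfolding lie1_def by (simp add: sum.distrib sum_subtractf algebra_simps)
  qed
  define LL where "LL a b = (\<Sum>f\<in>UNIV. l x f * SigN G n x f a b)" for a b
  have LLsym: "LL a b = LL b a" for a b unfolding LL_def using Sigsym by simp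
  have dss: "\<forall>i b. dif i (\<lambda>z. ss n l z b) x" unfolding ss_def FF_def by (simp add: dx)
  have dcl: "\<forall>i a b. dif i (\<lambda>z. cov1 G l z a b) x" unfolding cov1_def by (simp add: dx)
  have Lam: "cov1 G (lie1 n l) x a b = 2 * cov1 G (ss n l) x a b
      - (hess G n2 x a b * l2 x + pd b n2 x * pd a l2 x + pd a n2 x * pd b l2 x + n2 x * hess G l2 x a b)" for a b
  proof -
    have "cov1 G (lie1 n l) x a b = cov1 G (\<lambda>y b. 2 * ss n l y b - (pd b n2 y * l2 y + n2 y * pd b l2 y)) x a b"
      by (rule cov1_cong[OF Om x]) (simp add: lie1l)
    also have "\<dots> = 2 * cov1 G (ss n l) x a b - cov1 G (\<lambda>y b. pd b n2 y * l2 y + n2 y * pd b l2 y) x a b"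
      unfolding cov1_def using dss dx by (simp add: sum_subtractf sum_distrib_left algebra_simps)
    also have "cov1 G (\<lambda>y b. pd b n2 y * l2 y + n2 y * pd b l2 y) x a b
       = hess G n2 x a b * l2 x + pd b n2 x * pd a l2 x + pd a n2 x * pd b l2 x + n2 x * hess G l2 x a b"
      by (rule cov1_prod_grad) (use dx in auto)
    finally show ?thesis .
  qed
  have LLform: "LL a b = cov1 G (ss n l) x a b + cov1 G (ss n l) x b a
      - (l2 x * hess G n2 x a b + pd a n2 x * pd b l2 x + pd b n2 x * pd a l2 x + n2 x * hess G l2 x a b)
      + (\<Sum>c\<in>UNIV. n x c * pd c l2 x) * U x a b + l2 x * lie2 n U x a b" for a b
  proof -
    have c1: "lie2 n (cov1 G l) x a b - cov1 G (lie1 n l) x a b = - LL a b" for a b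
      unfolding LL_def using comm1[of l x n G a b] dx schl by (simp add: mult.commute)
    have "lie2 n (cov1 G l) x a b + lie2 n (cov1 G l) x b a = lie2 n (\<lambda>y a b. cov1 G l y a b + cov1 G l y b a) x a b"
      using lie2_symm[OF dcl] by simp
    also have "\<dots> = lie2 n (\<lambda>y a b. - 2 * l2 y * U y a b) x a b"
      by (rule lie2_cong[OF Om x]) (simp add: cl U_def)
    also have "\<dots> = - 2 * ((\<Sum>c\<in>UNIV. n x c * pd c l2 x) * U x a b + l2 x * lie2 n U x a b)"
      by (rule lie2_scal) (use dU dx in auto)
    finally have e: "lie2 n (cov1 G l) x a b + lie2 n (cov1 G l) x b a = \<dots>" .
    show ?thesis using c1[of a b] c1[of b a] e LLsym[of a b] Lam[of a b] Lam[of b a]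
      hn2sym[of a b] hl2sym[of a b] by (simp add: algebra_simps)
  qed

  have clx: "cov1 G l x b a = - 2 * l2 x * U x a b - cov1 G l x a b" for a b
    using cl x unfolding U_def by (simp add: algebra_simps)
  have FFx: "cov1 G l x c a = 2 * FF l x c a + cov1 G l x a c" for c a
    using FFl[of c a] by simp
  define RB where "RB c a b = cov2 G U x a b c + cov2 G U x b c a - cov2 G U x c a b
        + (2 * ss n l x c - n2 x * pd c l2 x) * U x a b
        + (FF l x c a * pd b n2 x + FF l x c b * pd a n2 x)" for c a b
  have SLform: "SL c a b = RB c a b + l x c * (lie2 n U x a b - hess G n2 x a b)" for c a b
    unfolding SLK Kform RB_def
    by (simp add: hn2sym[of b a] hn2sym[of c b] hn2sym[of c a] V2sym[of b a] V2sym[of c a] V2sym[of c b]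
       Usym[OF x, of b a] Usym[OF x, of c a] Usym[OF x, of c b] C2sym[of b a c]
       clx[of a b] FFx[of c a] FFx[of c b] lie1l[OF x, of c] algebra_simps; simp add: field_simps)
  have SigNform: "SigN G n x d a b = rhs g l l2 P n n2 G x d a b" for a b
  proof -
    have "SigN G n x d a b = (\<Sum>c\<in>UNIV. P x d c * SL c a b) + n x d * LL a b"
      unfolding SL_def LL_def by (rule delta_decomp) (use invP in simp)
    also have "(\<Sum>c\<in>UNIV. P x d c * SL c a b) = (\<Sum>c\<in>UNIV. P x d c * RB c a b)
        + (\<Sum>c\<in>UNIV. P x d c * l x c) * (lie2 n U x a b - hess G n2 x a b)"
      by (simp only: SLform distrib_left sum.distrib sum_distrib_right mult.assoc)
    also have "(\<Sum>c\<in>UNIV. P x d c * l x c) = - l2 x * n x d" using invPl[rule_format, of d] by linarith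
    finally show ?thesis
      unfolding rhs_def LLform RB_def U_def[symmetric] by (simp add: algebra_simps)
  qed
  have "Sigma_circ G n X W x d = (\<Sum>a\<in>UNIV. \<Sum>b\<in>UNIV. SigN G n x d a b * X x a * W x b)"
    by (rule step1) (use dx schW in auto)
  then show ?thesis by (simp add: SigNform)
qed


end
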